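(* Let $f:\mathbb{R}^n\to\mathbb{R}$ be twice continuously differentiable with $\nabla^2 f$ Lipschitz continuous with constant $L$. Let $x\in\mathbb{R}^n$, let $y^1,\dots,y^p\in\mathbb{R}^n$, let $v\in\mathbb{R}^n$ and $w=\nabla^2 f(x)v$, and suppose $p+n=\frac{n^2+n}{2}$. Parametrize a symmetric matrix $H=(h_{ij})$ by the vector $\alpha\in\mathbb{R}^{n(n+1)/2}$ of its entries $h_{ij}$, $i\le j$ (the coefficients of $\tfrac12 s^\top H s$ in the monomial basis $\{\tfrac12 s_i^2\}_{i}\cup\{s_is_j\}_{i<j}$). Let $M=\begin{bmatrix}M^1\\ M^2\end{bmatrix}$ be the square matrix of the linear map $\alpha\mapsto\big(\tfrac12 (y^1-x)^\top H(y^1-x),\dots,\tfrac12 (y^p-x)^\top H(y^p-x),\,Hv\big)$, where $M^1$ consists of the first $p$ rows and $M^2$ of the last $n$ rows, and let $$\delta=\begin{bmatrix}\big(f(y^\ell)-f(x)-\nabla f(x)^\top(y^\ell-x)\big)_{\ell=1,\dots,p}\\ w\end{bmatrix}.$$ Assume $M$ is nonsingular and let $H$ be the symmetric matrix whose parameter vector $\alpha$ solves $M\alpha=\delta$. Let $\Delta_y=\max_{1\le\ell\le p}\|y^\ell-x\|$ and let $\hat M=\begin{bmatrix}M^1/\Delta_y^2\\ M^2\end{bmatrix}$ (assumed nonsingular). Then $$\|H-\nabla^2 f(x)\|=\mathcal{O}(\Delta_y),$$ i.e. $\|H-\nabla^2 f(x)\|\le \kappa\,\Delta_y$ where the constant $\kappa$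 depends only on $L$, the dimensions, and $\|\hat M^{-1}\|$. (Thus $H$ together with $\nabla f(x)$ gives a fully quadratic model.)
   Context: $\mathcal{O}(A)$ denotes a constant times $A$, where the constant is independent of $A$. Norms are Euclidean (spectral for matrices). *)

theory Defs
  imports "HOL-Analysis.Analysis"
begin

text \<open>Vectors in R^n are \<open>(real,'n) vec\<close>; the index type carries a linear order so that
 the parameter vector alpha can be indexed by pairs (i,j) with i \<le> j.\<close>

definition param_idx :: "('n::{finite,linorder} \<times> 'n) set" where
  "param_idx = {(i,j). i \<le> j}"

definition params :: "('n::{finite,linorder} \<times> 'n \<Rightarrow> real) set" where
  "params = {\<alpha>. \<forall>ij. ij \<notin> param_idx \<longrightarrow> \<alpha> ij = 0}"

definition symmat :: "('n::{finite,linorder} \<times> 'n \<Rightarrow> real) \<Rightarrow> ((real,'n) vec,'n) vec" where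
  "symmat \<alpha> = (\<chi> i j. if i \<le> j then \<alpha> (i,j) else \<alpha> (j,i))"

definition param_norm :: "('n::{finite,linorder} \<times> 'n \<Rightarrow> real) \<Rightarrow> real" where
  "param_norm \<alpha> = sqrt (\<Sum>ij\<in>param_idx. (\<alpha> ij)\<^sup>2)"

definition out_space :: "nat \<Rightarrow> ((nat \<Rightarrow> real) \<times> (real,'n::finite) vec) set" where
  "out_space p = {(r,u). \<forall>l. l \<notin> {1..p} \<longrightarrow> r l = 0}"

definition out_norm :: "nat \<Rightarrow> (nat \<Rightarrow> real) \<times> (real,'n::finite) vec \<Rightarrow> real" where
  "out_norm p z = sqrt ((\<Sum>l=1..p. (fst z l)\<^sup>2) + (norm (snd z))\<^sup>2)"

definition Mmap :: "nat \<Rightarrow> (nat \<Rightarrow> (real,'n) vec) \<Rightarrow> (real,'n) vec \<Rightarrow> (real,'n) vec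
     \<Rightarrow> ('n::{finite,linorder} \<times> 'n \<Rightarrow> real) \<Rightarrow> (nat \<Rightarrow> real) \<times> (real,'n) vec" where
  "Mmap p y x v \<alpha> =
     ((\<lambda>l. if l \<in> {1..p} then (1/2) * ((y l - x) \<bullet> (symmat \<alpha> *v (y l - x))) else 0),
      symmat \<alpha> *v v)"

text \<open>Delta_y = max_l ||y^l - x|| (taken to be 0 if p = 0).\<close>
definition Delta_y :: "nat \<Rightarrow> (nat \<Rightarrow> (real,'n::finite) vec) \<Rightarrow> (real,'n) vec \<Rightarrow> real" where
  "Delta_y p y x = Max (insert 0 ((\<lambda>l. norm (y l - x)) ` {1..p}))"

definition Mhat_map :: "nat \<Rightarrow> (nat \<Rightarrow> (real,'n) vec) \<Rightarrow> (real,'n) vec \<Rightarrow> (real,'n) vec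
     \<Rightarrow> ('n::{finite,linorder} \<times> 'n \<Rightarrow> real) \<Rightarrow> (nat \<Rightarrow> real) \<times> (real,'n) vec" where
  "Mhat_map p y x v \<alpha> =
     ((\<lambda>l. fst (Mmap p y x v \<alpha>) l / (Delta_y p y x)\<^sup>2), snd (Mmap p y x v \<alpha>))"

definition nonsingular_map :: "nat \<Rightarrow> (('n::{finite,linorder} \<times> 'n \<Rightarrow> real) \<Rightarrow> (nat \<Rightarrow> real) \<times> (real,'n) vec) \<Rightarrow> bool" where
  "nonsingular_map p A \<longleftrightarrow> bij_betw A params (out_space p)"

text \<open>Spectral norm of the inverse of a nonsingular map A:
  sup_{z \<noteq> 0} ||A^{-1} z|| / ||z|| = sup_{alpha \<noteq> 0} ||alpha|| / ||A alpha||.\<close>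
definition inv_norm :: "nat \<Rightarrow> (('n::{finite,linorder} \<times> 'n \<Rightarrow> real) \<Rightarrow> (nat \<Rightarrow> real) \<times> (real,'n) vec) \<Rightarrow> real" where
  "inv_norm p A = Sup {param_norm \<alpha> / out_norm p (A \<alpha>) | \<alpha>. \<alpha> \<in> params \<and> (\<exists>ij. \<alpha> ij \<noteq> 0)}"

definition spec_norm :: "((real,'n::finite) vec,'n) vec \<Rightarrow> real" where
  "spec_norm A = onorm (\<lambda>h. A *v h)"

end

theory Submission
  imports Defs
begin
lemma deriv_line_f:
  fixes f :: "real^'n \<Rightarrow> real"
  assumes "\<forall>z. (f has_derivative (\<lambda>h. g z \<bullet> h)) (at z)"
  shows "DERIV (\<lambda>r. f (a + r *\<^sub>R u)) r :> g (a + r *\<^sub>R u) \<bullet> u"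
proof -
  have l: "((\<lambda>r. a + r *\<^sub>R u) has_derivative (\<lambda>h. h *\<^sub>R u)) (at r)"
    by (auto intro!: derivative_eq_intros)
  have "((\<lambda>r. f (a + r *\<^sub>R u)) has_derivative (\<lambda>h. g (a + r *\<^sub>R u) \<bullet> (h *\<^sub>R u))) (at r)"
    using has_derivative_compose[OF l assms[rule_format, of "a + r *\<^sub>R u"]] by simp
  moreover have "(\<lambda>h. g (a + r *\<^sub>R u) \<bullet> (h *\<^sub>R u)) = (*) (g (a + r *\<^sub>R u) \<bullet> u)"
    by (rule ext) (simp add: mult.commute)
  ultimately show ?thesis by (simp add: has_field_derivative_def)
qed

lemma deriv_line_g:
  fixes g :: "real^'n \<Rightarrow> real^'n"
  assumes "\<forall>z. (g has_derivative (\<lambda>h. Hf z *v h)) (at z)"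
  shows "DERIV (\<lambda>r. g (a + r *\<^sub>R u) \<bullet> w) r :> (Hf (a + r *\<^sub>R u) *v u) \<bullet> w"
proof -
  have l: "((\<lambda>r. a + r *\<^sub>R u) has_derivative (\<lambda>h. h *\<^sub>R u)) (at r)"
    by (auto intro!: derivative_eq_intros)
  have "((\<lambda>r. g (a + r *\<^sub>R u)) has_derivative (\<lambda>h. Hf (a + r *\<^sub>R u) *v (h *\<^sub>R u))) (at r)"
    using has_derivative_compose[OF l assms[rule_format, of "a + r *\<^sub>R u"]] by simp
  then have "((\<lambda>r. g (a + r *\<^sub>R u) \<bullet> w) has_derivative (\<lambda>h. (Hf (a + r *\<^sub>R u) *v (h *\<^sub>R u)) \<bullet> w)) (at r)"
    by (auto intro!: derivative_eq_intros)
  moreover have "(\<lambda>h. (Hf (a + r *\<^sub>R u) *v (h *\<^sub>R u)) \<bullet> w) = (*) ((Hf (a + r *\<^sub>R u) *v u) \<bullet> w)"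
    by (rule ext) (simp add: mult.commute matrix_vector_mult_scaleR)
  ultimately show ?thesis by (simp add: has_field_derivative_def)
qed

lemma matvec_le: "norm (A *v h) \<le> spec_norm A * norm h"
  unfolding spec_norm_def by (rule onorm) simp

lemma half_bound: "(A::real) = X / 2 \<Longrightarrow> \<bar>X\<bar> \<le> B \<Longrightarrow> \<bar>A\<bar> \<le> B / 2"
  by arith

lemma taylor2:
  fixes f :: "real^'n \<Rightarrow> real"
  assumes fd: "\<forall>z. (f has_derivative (\<lambda>h. g z \<bullet> h)) (at z)"
    and gd: "\<forall>z. (g has_derivative (\<lambda>h. Hf z *v h)) (at z)"
    and lip: "\<forall>a b. spec_norm (Hf a - Hf b) \<le> L * norm (a - b)"
  shows "\<bar>f (a + u) - f a - g a \<bullet> u - (1/2) * (u \<bullet> (Hf a *v u))\<bar> \<le> \<bar>L\<bar> / 2 * norm u ^ 3"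
proof -
  define d where "d m r = (if m = 0 then f (a + r *\<^sub>R u) else if m = 1 then g (a + r *\<^sub>R u) \<bullet> u
     else (Hf (a + r *\<^sub>R u) *v u) \<bullet> u)" for m :: nat and r :: real
  have d01: "d 0 = (\<lambda>r. f (a + r *\<^sub>R u))" "d (Suc 0) = (\<lambda>r. g (a + r *\<^sub>R u) \<bullet> u)"
    "d (Suc (Suc 0)) = (\<lambda>r. (Hf (a + r *\<^sub>R u) *v u) \<bullet> u)"
    by (auto simp: d_def fun_eq_iff)
  have "\<exists>t. 0 < t \<and> t < 1 \<and> d 0 1 = (\<Sum>m<2. d m 0 / fact m * 1 ^ m) + d 2 t / fact 2 * 1 ^ 2"
  proof (rule Maclaurin)
    show "\<forall>m t. m < 2 \<and> 0 \<le> t \<and> t \<le> 1 \<longrightarrow> DERIV (d m) t :> d (Suc m) t"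
    proof (intro allI impI)
      fix m :: nat and t :: real assume "m < 2 \<and> 0 \<le> t \<and> t \<le> 1"
      then have "m = 0 \<or> m = 1" by auto
      then show "DERIV (d m) t :> d (Suc m) t"
      proof
        assume "m = 0" then show ?thesis
          using deriv_line_f[OF fd, of a u t] by (simp add: d01 d_def)
      next
        assume "m = 1" then show ?thesis
          using deriv_line_g[OF gd, of a u u t] by (simp add: d01 d_def)
      qed
    qed
  qed simp_all
  then obtain t where t: "0 < t" "t < 1"
    and eq: "d 0 1 = (\<Sum>m<2. d m 0 / fact m * 1 ^ m) + d 2 t / fact 2 * 1 ^ 2" by blast
  have eq2: "f (a + u) = f a + g a \<bullet> u + ((Hf (a + t *\<^sub>R u) *v u) \<bullet> u) / 2"
    using eq by (simp add: d_def eval_nat_numeral)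
  have "\<bar>(Hf (a + t *\<^sub>R u) *v u) \<bullet> u - (Hf a *v u) \<bullet> u\<bar> = \<bar>((Hf (a + t *\<^sub>R u) - Hf a) *v u) \<bullet> u\<bar>"
    by (simp add: matrix_vector_mult_diff_rdistrib inner_diff_left)
  also have "\<dots> \<le> norm ((Hf (a + t *\<^sub>R u) - Hf a) *v u) * norm u"
    by (rule Cauchy_Schwarz_ineq2)
  also have "\<dots> \<le> (spec_norm (Hf (a + t *\<^sub>R u) - Hf a) * norm u) * norm u"
    by (rule mult_right_mono[OF matvec_le]) simp
  also have "\<dots> \<le> (\<bar>L\<bar> * norm u * norm u) * norm u"
  proof -
    have "spec_norm (Hf (a + t *\<^sub>R u) - Hf a) \<le> L * norm (t *\<^sub>R u)"
      using lip[rule_format, of "a + t *\<^sub>R u" a] by simp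
    also have "\<dots> = L * (t * norm u)" using t by simp
    also have "\<dots> \<le> \<bar>L\<bar> * (t * norm u)"
      using t by (intro mult_right_mono) auto
    also have "\<dots> \<le> \<bar>L\<bar> * norm u"
      using t by (intro mult_left_mono) (auto simp: mult_left_le_one_le)
    finally show ?thesis by (intro mult_right_mono) auto
  qed
  finally have b: "\<bar>(Hf (a + t *\<^sub>R u) *v u) \<bullet> u - (Hf a *v u) \<bullet> u\<bar> \<le> \<bar>L\<bar> * norm u ^ 3"
    by (simp add: power3_eq_cube mult.assoc)
  have "f (a + u) - f a - g a \<bullet> u - (1/2) * (u \<bullet> (Hf a *v u))
       = ((Hf (a + t *\<^sub>R u) *v u) \<bullet> u - (Hf a *v u) \<bullet> u) / 2"
    using eq2 by (simp add: inner_commute field_simps)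
  from half_bound[OF this b] show ?thesis by simp
qed

lemma hess_diff_bound:
  assumes lip: "\<forall>a b. spec_norm (Hf a - Hf b) \<le> L * norm (a - b)"
  shows "\<bar>(Hf z *v t) \<bullet> s - (Hf x *v t) \<bullet> s\<bar> \<le> \<bar>L\<bar> * norm (z - x) * norm t * norm s"
proof -
  have "\<bar>(Hf z *v t) \<bullet> s - (Hf x *v t) \<bullet> s\<bar> = \<bar>((Hf z - Hf x) *v t) \<bullet> s\<bar>"
    by (simp add: matrix_vector_mult_diff_rdistrib inner_diff_left)
  also have "\<dots> \<le> norm ((Hf z - Hf x) *v t) * norm s"
    by (rule Cauchy_Schwarz_ineq2)
  also have "\<dots> \<le> (spec_norm (Hf z - Hf x) * norm t) * norm s"
    by (rule mult_right_mono[OF matvec_le]) simp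
  also have "\<dots> \<le> (\<bar>L\<bar> * norm (z - x) * norm t) * norm s"
  proof -
    have "spec_norm (Hf z - Hf x) \<le> \<bar>L\<bar> * norm (z - x)"
      using lip[rule_format, of z x] by (metis abs_ge_self mult_right_mono norm_ge_zero order.trans)
    then show ?thesis by (intro mult_right_mono) auto
  qed
  finally show ?thesis .
qed

lemma second_diff:
  fixes f :: "real^'n \<Rightarrow> real"
  assumes fd: "\<forall>z. (f has_derivative (\<lambda>h. g z \<bullet> h)) (at z)"
    and gd: "\<forall>z. (g has_derivative (\<lambda>h. Hf z *v h)) (at z)"
  shows "\<exists>z. norm (z - x) \<le> norm s + norm t \<and>
     f (x + s + t) - f (x + s) - f (x + t) + f x = (Hf z *v t) \<bullet> s"
proof -
  have "\<exists>\<xi>. 0 < \<xi> \<and> \<xi> < 1 \<and>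
     (f ((x + t) + 1 *\<^sub>R s) - f (x + 1 *\<^sub>R s)) - (f ((x + t) + 0 *\<^sub>R s) - f (x + 0 *\<^sub>R s))
      = (1 - 0) * (g ((x + t) + \<xi> *\<^sub>R s) \<bullet> s - g (x + \<xi> *\<^sub>R s) \<bullet> s)"
    by (rule MVT2) (auto intro!: DERIV_diff deriv_line_f[OF fd])
  then obtain \<xi> where xi: "0 < \<xi>" "\<xi> < 1" and e1:
    "f (x + t + s) - f (x + s) - f (x + t) + f x = g ((x + \<xi> *\<^sub>R s) + 1 *\<^sub>R t) \<bullet> s - g ((x + \<xi> *\<^sub>R s) + 0 *\<^sub>R t) \<bullet> s"
    by (auto simp: algebra_simps)
  have "\<exists>\<eta>. 0 < \<eta> \<and> \<eta> < 1 \<and>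
     g ((x + \<xi> *\<^sub>R s) + 1 *\<^sub>R t) \<bullet> s - g ((x + \<xi> *\<^sub>R s) + 0 *\<^sub>R t) \<bullet> s
      = (1 - 0) * ((Hf ((x + \<xi> *\<^sub>R s) + \<eta> *\<^sub>R t) *v t) \<bullet> s)"
    by (rule MVT2) (auto intro!: deriv_line_g[OF gd])
  then obtain \<eta> where eta: "0 < \<eta>" "\<eta> < 1" and e2:
    "g ((x + \<xi> *\<^sub>R s) + 1 *\<^sub>R t) \<bullet> s - g ((x + \<xi> *\<^sub>R s) + 0 *\<^sub>R t) \<bullet> s
      = (Hf ((x + \<xi> *\<^sub>R s) + \<eta> *\<^sub>R t) *v t) \<bullet> s" by auto
  have "norm (((x + \<xi> *\<^sub>R s) + \<eta> *\<^sub>R t) - x) \<le> norm (\<xi> *\<^sub>R s) + norm (\<eta> *\<^sub>R t)"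
    by (simp add: norm_triangle_ineq del: norm_scaleR)
  also have "\<dots> \<le> norm s + norm t"
    using xi eta by (simp add: mult_left_le_one_le add_mono)
  finally show ?thesis using e1 e2 by (intro exI[of _ "(x + \<xi> *\<^sub>R s) + \<eta> *\<^sub>R t"]) (simp add: add_ac)
qed

lemma axis_quad: "(H *v (e *\<^sub>R axis j 1)) \<bullet> (e *\<^sub>R axis i (1::real)) = e*e* (H::real^'n^'n) $ i $ j"
  by (simp add: matrix_vector_mult_scaleR inner_axis matrix_vector_mult_basis column_def)

lemma abs3: "(X1::real) = X2 \<Longrightarrow> \<bar>X1 - A\<bar> \<le> c \<Longrightarrow> \<bar>X2 - B\<bar> \<le> c \<Longrightarrow> \<bar>A - B\<bar> \<le> c + c"
  by arith

lemma hess_sym: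
  fixes f :: "real^'n \<Rightarrow> real"
  assumes fd: "\<forall>z. (f has_derivative (\<lambda>h. g z \<bullet> h)) (at z)"
    and gd: "\<forall>z. (g has_derivative (\<lambda>h. Hf z *v h)) (at z)"
    and lip: "\<forall>a b. spec_norm (Hf a - Hf b) \<le> L * norm (a - b)"
  shows "Hf x $ i $ j = Hf x $ j $ i"
proof (rule ccontr)
  define d where "d = Hf x $ i $ j - Hf x $ j $ i"
  assume "Hf x $ i $ j \<noteq> Hf x $ j $ i"
  then have dpos: "\<bar>d\<bar> > 0" by (simp add: d_def)
  define e where "e = \<bar>d\<bar> / (8 * \<bar>L\<bar> + 8)"
  have epos: "e > 0" using dpos by (simp add: e_def add_nonneg_pos)
  define s where "s = e *\<^sub>R axis i (1::real)"
  define t where "t = e *\<^sub>R axis j (1::real)"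
  have ns: "norm s = e" "norm t = e" using epos by (simp_all add: s_def t_def)
  obtain z1 where z1: "norm (z1 - x) \<le> norm s + norm t"
    "f (x + s + t) - f (x + s) - f (x + t) + f x = (Hf z1 *v t) \<bullet> s"
    using second_diff[OF fd gd] by blast
  obtain z2 where z2: "norm (z2 - x) \<le> norm t + norm s"
    "f (x + t + s) - f (x + t) - f (x + s) + f x = (Hf z2 *v s) \<bullet> t"
    using second_diff[OF fd gd] by blast
  have eqz: "(Hf z1 *v t) \<bullet> s = (Hf z2 *v s) \<bullet> t" using z1(2) z2(2) by (simp add: add_ac)
  have b1: "\<bar>(Hf z1 *v t) \<bullet> s - (Hf x *v t) \<bullet> s\<bar> \<le> \<bar>L\<bar> * (2 * e) * e * e"
  proof -
    have "\<bar>L\<bar> * norm (z1 - x) * norm t * norm s \<le> \<bar>L\<bar> * (2 * e) * e * e"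
      using z1(1) ns epos by (simp only: ns) (intro mult_right_mono mult_left_mono, auto)
    then show ?thesis using hess_diff_bound[OF lip, of z1 t s x] by linarith
  qed
  have b2: "\<bar>(Hf z2 *v s) \<bullet> t - (Hf x *v s) \<bullet> t\<bar> \<le> \<bar>L\<bar> * (2 * e) * e * e"
  proof -
    have "\<bar>L\<bar> * norm (z2 - x) * norm s * norm t \<le> \<bar>L\<bar> * (2 * e) * e * e"
      using z2(1) ns epos by (simp only: ns) (intro mult_right_mono mult_left_mono, auto)
    then show ?thesis using hess_diff_bound[OF lip, of z2 s t x] by linarith
  qed
  have c1: "(Hf x *v t) \<bullet> s = e * e * Hf x $ i $ j"
    unfolding s_def t_def by (rule axis_quad)
  have c2: "(Hf x *v s) \<bullet> t = e * e * Hf x $ j $ i"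
    unfolding s_def t_def by (rule axis_quad)
  have edd: "e * e * d = (Hf x *v t) \<bullet> s - (Hf x *v s) \<bullet> t"
    using c1 c2 unfolding d_def by (simp add: algebra_simps)
  have "\<bar>e * e * d\<bar> \<le> \<bar>L\<bar> * (2 * e) * e * e + \<bar>L\<bar> * (2 * e) * e * e"
    unfolding edd using abs3[OF eqz b1 b2] .
  then have "e * e * \<bar>d\<bar> \<le> e * e * (4 * \<bar>L\<bar> * e)" using epos by (simp add: abs_mult algebra_simps)
  then have "\<bar>d\<bar> \<le> 4 * \<bar>L\<bar> * e" using epos by (simp add: mult_le_cancel_left_pos)
  also have "\<dots> = \<bar>d\<bar> * (4 * \<bar>L\<bar> / (8 * \<bar>L\<bar> + 8))" by (simp add: e_def)
  also have "\<dots> < \<bar>d\<bar> * 1"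
    using dpos by (intro mult_strict_left_mono) (auto simp: field_simps)
  finally show False by simp
qed

lemma symmat_sum:
  "symmat (\<lambda>ij. \<Sum>k\<in>K. c k * a k ij) = (\<Sum>k\<in>K. c k *\<^sub>R symmat (a k))"
  by (simp add: vec_eq_iff symmat_def sum_component)

lemma sum_matvec: "(\<Sum>k\<in>K. c k *\<^sub>R (S k :: real^'n^'m)) *v s = (\<Sum>k\<in>K. c k *\<^sub>R (S k *v s))"
  by (induct K rule: infinite_finite_induct)
     (simp_all add: matrix_vector_mult_add_rdistrib scaleR_matrix_vector_assoc)

lemma Mhat_lin:
  "Mhat_map p y x v (\<lambda>ij. \<Sum>k\<in>K. c k * a k ij) =
    ((\<lambda>l. \<Sum>k\<in>K. c k * fst (Mhat_map p y x v (a k)) l), \<Sum>k\<in>K. c k *\<^sub>R snd (Mhat_map p y x v (a k)))"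
  apply (simp add: Mhat_map_def Mmap_def symmat_sum sum_matvec inner_sum_right sum_distrib_left
      sum_divide_distrib fun_eq_iff)
  by (auto intro: sum.neutral)


lemma sum_K:
  fixes h :: "nat + 'n::finite \<Rightarrow> 'b::comm_monoid_add"
  shows "(\<Sum>k\<in>Inl ` {1..p} \<union> Inr ` UNIV. h k) = (\<Sum>l\<in>{1..p}. h (Inl l)) + (\<Sum>i\<in>UNIV. h (Inr i))"
  by (subst sum.union_disjoint) (auto simp: sum.reindex)

lemma out_norm_ge: "l \<in> {1..p} \<Longrightarrow> \<bar>fst z l\<bar> \<le> out_norm p z"
  unfolding out_norm_def
proof -
  assume l: "l \<in> {1..p}"
  have "(fst z l)\<^sup>2 \<le> (\<Sum>l=1..p. (fst z l)\<^sup>2)"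
    by (rule member_le_sum) (use l in auto)
  also have "\<dots> \<le> (\<Sum>l=1..p. (fst z l)\<^sup>2) + (norm (snd z))\<^sup>2" by simp
  finally show "\<bar>fst z l\<bar> \<le> sqrt ((\<Sum>l=1..p. (fst z l)\<^sup>2) + (norm (snd z))\<^sup>2)"
    using real_sqrt_le_mono real_sqrt_abs by metis
qed

lemma out_norm_ge2: "\<bar>snd z $ i\<bar> \<le> out_norm p z"
  unfolding out_norm_def
proof -
  have "(snd z $ i)\<^sup>2 \<le> (norm (snd z))\<^sup>2"
    using component_le_norm_cart[of "snd z" i] by (metis abs_ge_zero power2_abs power_mono)
  also have "\<dots> \<le> (\<Sum>l=1..p. (fst z l)\<^sup>2) + (norm (snd z))\<^sup>2" by (simp add: sum_nonneg)
  finally show "\<bar>snd z $ i\<bar> \<le> sqrt ((\<Sum>l=1..p. (fst z l)\<^sup>2) + (norm (snd z))\<^sup>2)"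
    using real_sqrt_le_mono real_sqrt_abs by metis
qed

lemma out_norm_nonneg: "out_norm p z \<ge> 0"
  unfolding out_norm_def by (simp add: sum_nonneg)

lemma inv_expansion:
  fixes A :: "('n::{finite,linorder} \<times> 'n \<Rightarrow> real) \<Rightarrow> (nat \<Rightarrow> real) \<times> (real,'n) vec"
  assumes ns: "nonsingular_map p A"
    and lin: "\<And>(K::(nat + 'n) set) c a. A (\<lambda>ij. \<Sum>k\<in>K. c k * a k ij) =
         ((\<lambda>l. \<Sum>k\<in>K. c k * fst (A (a k)) l), \<Sum>k\<in>K. c k *\<^sub>R snd (A (a k)))"
  shows "\<exists>C. \<forall>\<alpha>\<in>params. param_norm \<alpha> \<le> C * out_norm p (A \<alpha>)"
proof -
  have inj: "inj_on A params" and img: "A ` params = out_space p"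
    using ns by (auto simp: nonsingular_map_def bij_betw_def)
  define E :: "nat + 'n \<Rightarrow> (nat \<Rightarrow> real) \<times> (real,'n) vec" where
    "E = case_sum (\<lambda>l. ((\<lambda>k. if k = l then 1 else 0), 0)) (\<lambda>i. ((\<lambda>k. 0), axis i 1))"
  define K :: "(nat + 'n) set" where "K = Inl ` {1..p} \<union> Inr ` UNIV"
  define a where "a k = inv_into params A (E k)" for k
  define c where "c z = case_sum (\<lambda>l. fst z l) (\<lambda>i. snd z $ i)" for z :: "(nat \<Rightarrow> real) \<times> (real,'n) vec"
  have EK: "E k \<in> out_space p" if "k \<in> K" for k
    using that by (auto simp: K_def E_def out_space_def)
  have aK: "a k \<in> params" "A (a k) = E k" if "k \<in> K" for k
    using EK[OF that] img unfolding a_def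
    by (metis inv_into_into, metis f_inv_into_f)
  have exp: "\<alpha> = (\<lambda>ij. \<Sum>k\<in>K. c (A \<alpha>) k * a k ij)" if al: "\<alpha> \<in> params" for \<alpha>
  proof -
    define z where "z = A \<alpha>"
    have zo: "z \<in> out_space p" using al img z_def by auto
    have "A (\<lambda>ij. \<Sum>k\<in>K. c z k * a k ij) = ((\<lambda>l. \<Sum>k\<in>K. c z k * fst (E k) l), \<Sum>k\<in>K. c z k *\<^sub>R snd (E k))"
      unfolding lin using aK(2) by (simp cong: sum.cong)
    also have "\<dots> = z"
    proof -
      have "(\<Sum>k\<in>K. c z k * fst (E k) l) = fst z l" for l
        unfolding K_def sum_K using zo by (auto simp: c_def E_def out_space_def if_distrib[of "(*) _"] cong: if_cong)
      moreover have "(\<Sum>k\<in>K. c z k *\<^sub>R snd (E k)) = snd z"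
        using basis_expansion[of "snd z"] unfolding K_def sum_K by (simp add: c_def E_def scalar_mult_eq_scaleR)
      ultimately show ?thesis by (simp add: prod_eq_iff fun_eq_iff)
    qed
    finally have "A (\<lambda>ij. \<Sum>k\<in>K. c z k * a k ij) = A \<alpha>" by (simp add: z_def)
    moreover have "(\<lambda>ij. \<Sum>k\<in>K. c z k * a k ij) \<in> params"
      using aK(1) by (auto simp: params_def intro!: sum.neutral)
    ultimately show ?thesis using inj al unfolding z_def by (auto dest: inj_onD)
  qed
  define C where "C = (\<Sum>ij\<in>param_idx. \<Sum>k\<in>K. \<bar>a k ij\<bar>)"
  have "param_norm \<alpha> \<le> C * out_norm p (A \<alpha>)" if al: "\<alpha> \<in> params" for \<alpha>
  proof -
    define z where "z = A \<alpha>"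
    have cb: "\<bar>c z k\<bar> \<le> out_norm p z" if "k \<in> K" for k
      using that by (auto simp: K_def c_def out_norm_ge out_norm_ge2)
    have comp: "\<bar>\<alpha> ij\<bar> \<le> out_norm p z * (\<Sum>k\<in>K. \<bar>a k ij\<bar>)" for ij
    proof -
      have e: "\<alpha> ij = (\<Sum>k\<in>K. c z k * a k ij)"
        unfolding z_def by (rule fun_cong[OF exp[OF al]])
      have "\<bar>\<alpha> ij\<bar> = \<bar>\<Sum>k\<in>K. c z k * a k ij\<bar>" by (simp only: e)
      also have "\<dots> \<le> (\<Sum>k\<in>K. \<bar>c z k\<bar> * \<bar>a k ij\<bar>)"
        by (rule order_trans[OF sum_abs]) (simp add: abs_mult)
      also have "\<dots> \<le> (\<Sum>k\<in>K. out_norm p z * \<bar>a k ij\<bar>)"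
        by (intro sum_mono mult_right_mono cb) auto
      finally show ?thesis by (simp add: sum_distrib_left)
    qed
    have "param_norm \<alpha> = L2_set \<alpha> param_idx"
      by (simp add: param_norm_def L2_set_def)
    also have "\<dots> \<le> (\<Sum>ij\<in>param_idx. \<bar>\<alpha> ij\<bar>)" by (rule L2_set_le_sum_abs)
    also have "\<dots> \<le> (\<Sum>ij\<in>param_idx. out_norm p z * (\<Sum>k\<in>K. \<bar>a k ij\<bar>))"
      by (intro sum_mono comp)
    finally show ?thesis by (simp add: C_def z_def sum_distrib_left mult.commute)
  qed
  then show ?thesis by blast
qed


lemma out_norm_zero:
  assumes "z \<in> out_space p" "out_norm p z = 0"
  shows "z = ((\<lambda>l. 0), 0)"
proof -
  have "fst z l = 0" for l
    using assms out_norm_ge[of l p z] by (cases "l \<in> {1..p}") (auto simp: out_space_def)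
  moreover have "snd z = 0"
    using assms out_norm_ge2[of z _ p] by (auto simp: vec_eq_iff)
  ultimately show ?thesis by (simp add: prod_eq_iff fun_eq_iff)
qed

lemma inv_norm_bound:
  fixes A :: "('n::{finite,linorder} \<times> 'n \<Rightarrow> real) \<Rightarrow> (nat \<Rightarrow> real) \<times> (real,'n) vec"
  assumes ns: "nonsingular_map p A"
    and lin: "\<And>(K::(nat + 'n) set) c a. A (\<lambda>ij. \<Sum>k\<in>K. c k * a k ij) =
         ((\<lambda>l. \<Sum>k\<in>K. c k * fst (A (a k)) l), \<Sum>k\<in>K. c k *\<^sub>R snd (A (a k)))"
    and g: "\<gamma> \<in> params"
  shows "param_norm \<gamma> \<le> inv_norm p A * out_norm p (A \<gamma>)"
proof -
  obtain C where C: "\<forall>\<alpha>\<in>params. param_norm \<alpha> \<le> C * out_norm p (A \<alpha>)"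
    using inv_expansion[OF ns lin] by blast
  have inj: "inj_on A params" and img: "A ` params = out_space p"
    using ns by (auto simp: nonsingular_map_def bij_betw_def)
  define S where "S = {param_norm \<alpha> / out_norm p (A \<alpha>) | \<alpha>. \<alpha> \<in> params \<and> (\<exists>ij. \<alpha> ij \<noteq> 0)}"
  have invS: "inv_norm p A = Sup S" by (simp add: inv_norm_def S_def)
  have pn0: "param_norm \<alpha> \<ge> 0" for \<alpha> by (simp add: param_norm_def sum_nonneg)
  have rC: "param_norm \<alpha> / out_norm p (A \<alpha>) \<le> \<bar>C\<bar>" if "\<alpha> \<in> params" for \<alpha>
  proof (cases "out_norm p (A \<alpha>) = 0")
    case True then show ?thesis by simp
  next
    case False
    then have "out_norm p (A \<alpha>) > 0" using out_norm_nonneg[of p "A \<alpha>"] by linarith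
    then show ?thesis using C that
      by (simp add: divide_le_eq) (meson abs_ge_self mult_right_mono order_trans less_imp_le)
  qed
  have bdd: "bdd_above S" unfolding S_def using rC by (auto intro!: bdd_aboveI[of _ "\<bar>C\<bar>"])
  have A0: "A (\<lambda>ij. 0) = ((\<lambda>l. 0), 0)" using lin[where K="{}"] by simp
  have p0: "(\<lambda>ij. 0) \<in> params" by (simp add: params_def)
  show ?thesis
  proof (cases "\<exists>ij. \<gamma> ij \<noteq> 0")
    case False
    then have g0: "\<gamma> = (\<lambda>ij. 0)" by auto
    define i0 :: 'n where "i0 = undefined"
    define \<alpha>0 :: "'n \<times> 'n \<Rightarrow> real" where "\<alpha>0 = (\<lambda>ij. if ij = (i0, i0) then 1 else 0)"
    have "\<alpha>0 \<in> params" by (auto simp: \<alpha>0_def params_def param_idx_def)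
    moreover have "\<exists>ij. \<alpha>0 ij \<noteq> 0" by (auto simp: \<alpha>0_def)
    ultimately have "param_norm \<alpha>0 / out_norm p (A \<alpha>0) \<in> S" unfolding S_def by blast
    then have "param_norm \<alpha>0 / out_norm p (A \<alpha>0) \<le> Sup S" using bdd by (rule cSup_upper)
    moreover have "param_norm \<alpha>0 / out_norm p (A \<alpha>0) \<ge> 0" using pn0[of \<alpha>0] out_norm_nonneg[of p "A \<alpha>0"] by (rule divide_nonneg_nonneg)
    ultimately have "inv_norm p A \<ge> 0" using invS by linarith
    then show ?thesis using g0 by (simp add: param_norm_def out_norm_nonneg)
  next
    case True
    have "out_norm p (A \<gamma>) \<noteq> 0"
    proof
      assume "out_norm p (A \<gamma>) = 0"
      then have "A \<gamma> = A (\<lambda>ij. 0)" using out_norm_zero[of "A \<gamma>" p] g img A0 by auto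
      then have "\<gamma> = (\<lambda>ij. 0)" using inj g p0 by (auto dest: inj_onD)
      then show False using True by auto
    qed
    then have pos: "out_norm p (A \<gamma>) > 0" using out_norm_nonneg[of p "A \<gamma>"] by linarith
    have "param_norm \<gamma> / out_norm p (A \<gamma>) \<in> S" unfolding S_def using g True by blast
    then have "param_norm \<gamma> / out_norm p (A \<gamma>) \<le> inv_norm p A" using bdd invS by (simp add: cSup_upper)
    then show ?thesis using pos by (simp add: divide_le_eq)
  qed
qed


lemma inv_norm_pos:
  fixes A :: "('n::{finite,linorder} \<times> 'n \<Rightarrow> real) \<Rightarrow> (nat \<Rightarrow> real) \<times> (real,'n) vec"
  assumes ns: "nonsingular_map p A"
    and lin: "\<And>(K::(nat + 'n) set) c a. A (\<lambda>ij. \<Sum>k\<in>K. c k * a k ij) =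
         ((\<lambda>l. \<Sum>k\<in>K. c k * fst (A (a k)) l), \<Sum>k\<in>K. c k *\<^sub>R snd (A (a k)))"
  shows "inv_norm p A \<ge> 0"
proof -
  define i0 :: 'n where "i0 = undefined"
  define \<alpha>0 :: "'n \<times> 'n \<Rightarrow> real" where "\<alpha>0 = (\<lambda>ij. if ij = (i0, i0) then 1 else 0)"
  have "\<alpha>0 \<in> params" by (auto simp: \<alpha>0_def params_def param_idx_def)
  from inv_norm_bound[OF ns lin this] have b: "param_norm \<alpha>0 \<le> inv_norm p A * out_norm p (A \<alpha>0)" .
  have "(i0, i0) \<in> param_idx" by (simp add: param_idx_def)
  then have "param_norm \<alpha>0 = 1"
    by (simp add: param_norm_def \<alpha>0_def if_distrib[of "\<lambda>x. x\<^sup>2"] cong: if_cong)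
  then have "0 < inv_norm p A * out_norm p (A \<alpha>0)" using b by linarith
  then show ?thesis using out_norm_nonneg[of p "A \<alpha>0"]
    by (metis less_eq_real_def mult_nonpos_nonneg not_le)
qed

lemma comp_le_param_norm:
  assumes "ij \<in> param_idx"
  shows "\<bar>\<gamma> ij\<bar> \<le> param_norm \<gamma>"
proof -
  have "(\<gamma> ij)\<^sup>2 \<le> (\<Sum>ij\<in>param_idx. (\<gamma> ij)\<^sup>2)"
    by (rule member_le_sum) (use assms in auto)
  then show ?thesis unfolding param_norm_def using real_sqrt_le_mono real_sqrt_abs by metis
qed

lemma Delta_ge: "l \<in> {1..p} \<Longrightarrow> norm (y l - x) \<le> Delta_y p y x"
  unfolding Delta_y_def by (rule Max_ge) auto

lemma Delta_nonneg: "Delta_y p y x \<ge> 0"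
  unfolding Delta_y_def by (rule Max_ge_iff[THEN iffD2]) auto

theorem theorem2:
  "\<exists>\<kappa> :: real \<Rightarrow> real \<Rightarrow> real.
    \<forall>(f :: (real,'n::{finite,linorder}) vec \<Rightarrow> real) (g :: (real,'n) vec \<Rightarrow> (real,'n) vec) (Hf :: (real,'n) vec \<Rightarrow> ((real,'n) vec,'n) vec)
      (L :: real) (x :: (real,'n) vec) (p :: nat) (y :: nat \<Rightarrow> (real,'n) vec) (v :: (real,'n) vec) (\<alpha> :: 'n \<times> 'n \<Rightarrow> real).
      (\<forall>z. (f has_derivative (\<lambda>h. g z \<bullet> h)) (at z)) \<and>
      (\<forall>z. (g has_derivative (\<lambda>h. Hf z *v h)) (at z)) \<and>
      continuous_on UNIV Hf \<and>
      (\<forall>a b. spec_norm (Hf a - Hf b) \<le> L * norm (a - b)) \<and>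
      p + CARD('n) = (CARD('n)^2 + CARD('n)) div 2 \<and>
      nonsingular_map p (Mmap p y x v) \<and>
      nonsingular_map p (Mhat_map p y x v) \<and>
      \<alpha> \<in> params \<and>
      Mmap p y x v \<alpha> =
        ((\<lambda>l. if l \<in> {1..p} then f (y l) - f x - g x \<bullet> (y l - x) else 0), Hf x *v v)
      \<longrightarrow> spec_norm (symmat \<alpha> - Hf x)
            \<le> \<kappa> L (inv_norm p (Mhat_map p y x v)) * Delta_y p y x"
proof (intro exI[of _ "\<lambda>L N. real CARD('n) ^ 4 * N * \<bar>L\<bar>"] allI impI, elim conjE)
  fix f :: "(real,'n::{finite,linorder}) vec \<Rightarrow> real" and g :: "(real,'n) vec \<Rightarrow> (real,'n) vec"
    and Hf :: "(real,'n) vec \<Rightarrow> ((real,'n) vec,'n) vec" and L x p y v and \<alpha> :: "'n \<times> 'n \<Rightarrow> real"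
  assume fd: "\<forall>z. (f has_derivative (\<lambda>h. g z \<bullet> h)) (at z)"
    and gd: "\<forall>z. (g has_derivative (\<lambda>h. Hf z *v h)) (at z)"
    and lip: "\<forall>a b. spec_norm (Hf a - Hf b) \<le> L * norm (a - b)"
    and pn: "p + CARD('n) = (CARD('n)^2 + CARD('n)) div 2"
    and nsh: "nonsingular_map p (Mhat_map p y x v)"
    and al: "\<alpha> \<in> params"
    and eqM: "Mmap p y x v \<alpha> =
        ((\<lambda>l. if l \<in> {1..p} then f (y l) - f x - g x \<bullet> (y l - x) else 0), Hf x *v v)"
  define n where "n = CARD('n)"
  define N where "N = inv_norm p (Mhat_map p y x v)"
  define D where "D = Delta_y p y x"
  define H where "H = Hf x"
  have sym: "H $ i $ j = H $ j $ i" for i j unfolding H_def by (rule hess_sym[OF fd gd lip])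
  define \<beta> :: "'n \<times> 'n \<Rightarrow> real" where "\<beta> = (\<lambda>(i,j). if i \<le> j then H $ i $ j else 0)"
  define \<gamma> where "\<gamma> = (\<lambda>ij. \<alpha> ij - \<beta> ij)"
  have sb: "symmat \<beta> = H" using sym by (auto simp: vec_eq_iff symmat_def \<beta>_def)
  have sg: "symmat \<gamma> = symmat \<alpha> - H"
    unfolding sb[symmetric] by (simp add: vec_eq_iff symmat_def \<gamma>_def)
  have gp: "\<gamma> \<in> params" using al by (auto simp: params_def \<gamma>_def \<beta>_def param_idx_def)
  define r where "r l = f (y l) - f x - g x \<bullet> (y l - x) - (1/2) * ((y l - x) \<bullet> (H *v (y l - x)))" for l
  have fstM: "(1/2) * ((y l - x) \<bullet> (symmat \<alpha> *v (y l - x))) = f (y l) - f x - g x \<bullet> (y l - x)"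
    if "l \<in> {1..p}" for l
    using fun_cong[OF arg_cong[OF eqM, of fst], of l] that by (simp add: Mmap_def)
  have sndM: "symmat \<alpha> *v v = H *v v"
    using arg_cong[OF eqM, of snd] by (simp add: Mmap_def H_def)
  have Mg: "Mhat_map p y x v \<gamma> = ((\<lambda>l. (if l \<in> {1..p} then r l else 0) / D\<^sup>2), 0)"
  proof -
    have "fst (Mhat_map p y x v \<gamma>) l = (if l \<in> {1..p} then r l else 0) / D\<^sup>2" for l
    proof (cases "l \<in> {1..p}")
      case True
      then show ?thesis using fstM[OF True]
        by (simp add: Mhat_map_def Mmap_def sg D_def r_def matrix_vector_mult_diff_rdistrib inner_diff_right
            algebra_simps)
    qed (auto simp: Mhat_map_def Mmap_def)
    moreover have "snd (Mhat_map p y x v \<gamma>) = 0"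
      using sndM by (simp add: Mhat_map_def Mmap_def sg matrix_vector_mult_diff_rdistrib)
    ultimately show ?thesis by (simp add: prod_eq_iff fun_eq_iff)
  qed
  have D0: "D \<ge> 0" unfolding D_def by (rule Delta_nonneg)
  have rb: "\<bar>(if l \<in> {1..p} then r l else 0) / D\<^sup>2\<bar> \<le> \<bar>L\<bar> / 2 * D" if "l \<in> {1..p}" for l
  proof -
    have t: "\<bar>r l\<bar> \<le> \<bar>L\<bar> / 2 * norm (y l - x) ^ 3"
      using taylor2[OF fd gd lip, of x "y l - x"] by (simp add: r_def H_def)
    have nl: "norm (y l - x) \<le> D" unfolding D_def using that by (rule Delta_ge)
    show ?thesis
    proof (cases "D = 0")
      case True then show ?thesis by simp
    next
      case False
      then have Dp: "D > 0" using D0 by linarith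
      have "\<bar>r l\<bar> \<le> \<bar>L\<bar> / 2 * D ^ 3"
        using t nl by (smt (verit) abs_ge_zero divide_nonneg_nonneg mult_left_mono norm_ge_zero power_mono)
      then have "\<bar>r l\<bar> / D\<^sup>2 \<le> \<bar>L\<bar> / 2 * D ^ 3 / D\<^sup>2" using Dp by (intro divide_right_mono) auto
      also have "\<dots> = \<bar>L\<bar> / 2 * D" using Dp by (simp add: power2_eq_square power3_eq_cube)
      finally show ?thesis using that by (simp add: abs_divide)
    qed
  qed
  have ob: "out_norm p (Mhat_map p y x v \<gamma>) \<le> real p * (\<bar>L\<bar> / 2 * D)"
  proof -
    have "out_norm p (Mhat_map p y x v \<gamma>) = L2_set (\<lambda>l. (if l \<in> {1..p} then r l else 0) / D\<^sup>2) {1..p}"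
      unfolding Mg by (simp add: out_norm_def L2_set_def)
    also have "\<dots> \<le> (\<Sum>l\<in>{1..p}. \<bar>(if l \<in> {1..p} then r l else 0) / D\<^sup>2\<bar>)" by (rule L2_set_le_sum_abs)
    also have "\<dots> \<le> (\<Sum>l\<in>{1..p}. \<bar>L\<bar> / 2 * D)" by (rule sum_mono) (rule rb)
    finally show ?thesis by simp
  qed
  have N0: "N \<ge> 0" unfolding N_def by (rule inv_norm_pos[OF nsh Mhat_lin])
  have pg: "param_norm \<gamma> \<le> N * out_norm p (Mhat_map p y x v \<gamma>)"
    unfolding N_def by (rule inv_norm_bound[OF nsh Mhat_lin gp])
  have pn2: "real p \<le> real n ^ 2"
  proof -
    have "p \<le> (n^2 + n) div 2" using pn unfolding n_def by linarith
    also have "\<dots> \<le> n^2"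
    proof -
      have "n \<le> n * n" by (cases n) auto
      then have "(n^2 + n) div 2 \<le> (2 * n^2) div 2" by (intro div_le_mono) (simp add: power2_eq_square)
      then show ?thesis by simp
    qed
    finally show ?thesis by (metis of_nat_le_iff of_nat_power)
  qed
  have "spec_norm (symmat \<alpha> - Hf x) = spec_norm (symmat \<gamma>)" by (simp add: sg H_def)
  also have "\<dots> \<le> real n * real n * param_norm \<gamma>"
    unfolding spec_norm_def n_def
  proof (rule onorm_le_matrix_component)
    fix i j :: 'n
    show "\<bar>symmat \<gamma> $ i $ j\<bar> \<le> param_norm \<gamma>"
      by (cases "i \<le> j") (auto simp: symmat_def param_idx_def intro!: comp_le_param_norm)
  qed
  also have "\<dots> \<le> real n * real n * (N * (real p * (\<bar>L\<bar> / 2 * D)))"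
  proof -
    have "N * out_norm p (Mhat_map p y x v \<gamma>) \<le> N * (real p * (\<bar>L\<bar> / 2 * D))"
      by (rule mult_left_mono[OF ob N0])
    with pg have "param_norm \<gamma> \<le> N * (real p * (\<bar>L\<bar> / 2 * D))" by linarith
    then show ?thesis by (intro mult_left_mono) auto
  qed
  also have "\<dots> \<le> real n * real n * (N * (real n ^ 2 * (\<bar>L\<bar> * D)))"
    using pn2 N0 D0 by (intro mult_left_mono mult_mono) (auto simp: mult_nonneg_nonneg)
  also have "\<dots> = real n ^ 4 * N * \<bar>L\<bar> * D" by (simp add: power2_eq_square power4_eq_xxxx algebra_simps)
  finally show "spec_norm (symmat \<alpha> - Hf x) \<le> real CARD('n) ^ 4 * inv_norm p (Mhat_map p y x v) * \<bar>L\<bar> * Delta_y p y x"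
    by (simp add: n_def N_def D_def)
qed

end
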